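(* Let $G$ be a finite group with identity $\xi$, let $S$ be a non-empty inverse-closed subset of $G$ with $\xi\notin S$, and let $d_\Gamma$ be the graph metric of the Cayley graph $\mathrm{Cay}(G,S)$. Let $d$ be a positive integer and let $C\subseteq G$ be a code with $\min\{d_\Gamma(c,c')\,:\,c,c'\in C,\ c\neq c'\}\geq d$. Let $H$ be a subgroup of $G$, let $X=\{Ha_1,\dots,Ha_m\}$ be the set of right cosets of $H$ in $G$ (so $m=|G|/|H|$), and let $T=S^{\lfloor\frac{d-1}{2}\rfloor}\cup\{\xi\}$. Then the optimal value of the integer program $$\text{maximize } \sum_{i=1}^{m}x_i\quad\text{subject to}\quad \Big(\sum_{t\in T}\rho_X^G(t)\Big)(x_1,\ldots,x_m)^t\leq |H|\,\mathbf{1},\qquad x_i\in\mathbb{Z},\ x_i\geq 0\ (1\leq i\leq m),$$ is at least $|C|$ (i.e., it is an upper bound on $|C|$), where $\mathbf{1}$ is the all-ones column vector of length $m$ and the inequality is entrywise.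
   Context: $\mathrm{Cay}(G,S)$ is the simple graph with vertex set $G$ in which $g,h$ are adjacent iff $gh^{-1}\in S$; $d_\Gamma(g,h)$ is the length of a shortest path between $g$ and $h$. For a positive integer $r$, $S^r=\{s_1\cdots s_t : s_1,\dots,s_t\in S,\ 1\leq t\leq r\}$. For the right cosets ordered as $Ha_1<\dots<Ha_m$, $\rho_X^G(g)$ is the $m\times m$ matrix whose $(i,j)$ entry is $1$ if $Ha_ig=Ha_j$ and $0$ otherwise. *)

theory Defs
  imports "HOL-Algebra.Algebra" "HOL-Library.Extended_Nat"
begin

definition cay_walk :: "('a, 'b) monoid_scheme \<Rightarrow> 'a set \<Rightarrow> nat \<Rightarrow> 'a \<Rightarrow> 'a \<Rightarrow> bool" where
  "cay_walk G S n g h \<longleftrightarrow> (\<exists>f :: nat \<Rightarrow> 'a. f 0 = g \<and> f n = h \<and>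
      (\<forall>i\<le>n. f i \<in> carrier G) \<and>
      (\<forall>i<n. f i \<otimes>\<^bsub>G\<^esub> inv\<^bsub>G\<^esub> (f (Suc i)) \<in> S))"

definition cay_dist :: "('a, 'b) monoid_scheme \<Rightarrow> 'a set \<Rightarrow> 'a \<Rightarrow> 'a \<Rightarrow> enat" where
  "cay_dist G S g h = (if \<exists>n. cay_walk G S n g h then enat (LEAST n. cay_walk G S n g h) else \<infinity>)"

definition set_power :: "('a, 'b) monoid_scheme \<Rightarrow> 'a set \<Rightarrow> nat \<Rightarrow> 'a set" where
  "set_power G S r = {foldr (\<otimes>\<^bsub>G\<^esub>) l \<one>\<^bsub>G\<^esub> | l. set l \<subseteq> S \<and> 1 \<le> length l \<and> length l \<le> r}"

definition rho :: "('a, 'b) monoid_scheme \<Rightarrow> 'a set \<Rightarrow> (nat \<Rightarrow> 'a) \<Rightarrow> 'a \<Rightarrow> nat \<Rightarrow> nat \<Rightarrow> int" where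
  "rho G H a g i j = (if (H #>\<^bsub>G\<^esub> a i) #>\<^bsub>G\<^esub> g = H #>\<^bsub>G\<^esub> a j then 1 else 0)"

definition ip_feasible :: "('a, 'b) monoid_scheme \<Rightarrow> 'a set \<Rightarrow> (nat \<Rightarrow> 'a) \<Rightarrow> nat \<Rightarrow> 'a set \<Rightarrow> (nat \<Rightarrow> int) \<Rightarrow> bool" where
  "ip_feasible G H a m T x \<longleftrightarrow>
     (\<forall>i\<in>{1..m}. 0 \<le> x i) \<and>
     (\<forall>i\<in>{1..m}. (\<Sum>j=1..m. (\<Sum>t\<in>T. rho G H a t i j) * x j) \<le> int (card H))"

definition ip_opt :: "('a, 'b) monoid_scheme \<Rightarrow> 'a set \<Rightarrow> (nat \<Rightarrow> 'a) \<Rightarrow> nat \<Rightarrow> 'a set \<Rightarrow> int" where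
  "ip_opt G H a m T = Max ((\<lambda>x. \<Sum>i=1..m. x i) ` {x. ip_feasible G H a m T x})"

end

theory Submission
  imports Defs
begin

lemma (in group) walk_list:
  assumes "set l \<subseteq> S" "S \<subseteq> carrier G" "h \<in> carrier G"
  shows "cay_walk G S (length l) (foldr (\<otimes>) l \<one> \<otimes> h) h"
  using assms(1)
proof (induction l)
  case Nil
  then show ?case using assms unfolding cay_walk_def by (intro exI[of _ "\<lambda>_. h"]) auto
next
  case (Cons s l)
  then obtain f where f: "f 0 = foldr (\<otimes>) l \<one> \<otimes> h" "f (length l) = h"
    "\<forall>i\<le>length l. f i \<in> carrier G" "\<forall>i<length l. f i \<otimes> inv (f (Suc i)) \<in> S"
    unfolding cay_walk_def by auto
  have lc: "foldr (\<otimes>) l \<one> \<in> carrier G" using Cons.prems assms(2)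
    by (induction l) auto
  have sc: "s \<in> carrier G" using Cons.prems assms(2) by auto
  define g where "g = (\<lambda>i. case i of 0 \<Rightarrow> s \<otimes> foldr (\<otimes>) l \<one> \<otimes> h | Suc j \<Rightarrow> f j)"
  have "g 0 \<otimes> inv (g (Suc 0)) = s"
    using f(1) lc sc assms(3) by (simp add: g_def m_assoc)
  hence "\<forall>i<length (s#l). g i \<otimes> inv (g (Suc i)) \<in> S"
    using f(4) Cons.prems by (auto simp: g_def less_Suc_eq_0_disj)
  moreover have "\<forall>i\<le>length (s#l). g i \<in> carrier G"
    using f(3) lc sc assms(3) by (auto simp: g_def split: nat.splits)
  ultimately show ?case unfolding cay_walk_def using f(2)
    by (intro exI[of _ g]) (simp add: g_def m_assoc)
qed

lemma (in group) dist_list: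
  assumes "set l \<subseteq> S" "S \<subseteq> carrier G" "h \<in> carrier G"
  shows "cay_dist G S (foldr (\<otimes>) l \<one> \<otimes> h) h \<le> enat (length l)"
proof -
  have w: "cay_walk G S (length l) (foldr (\<otimes>) l \<one> \<otimes> h) h" by (rule walk_list[OF assms])
  thus ?thesis unfolding cay_dist_def by (auto intro: Least_le)
qed

lemma (in group) foldr_closed: "set l \<subseteq> carrier G \<Longrightarrow> foldr (\<otimes>) l \<one> \<in> carrier G"
  by (induction l) auto

lemma (in group) foldr_append: "set l \<subseteq> carrier G \<Longrightarrow> set k \<subseteq> carrier G \<Longrightarrow>
  foldr (\<otimes>) (l @ k) \<one> = foldr (\<otimes>) l \<one> \<otimes> foldr (\<otimes>) k \<one>"
  by (induction l) (auto simp: m_assoc foldr_closed)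

lemma (in group) foldr_inv: "set l \<subseteq> carrier G \<Longrightarrow>
  inv (foldr (\<otimes>) l \<one>) = foldr (\<otimes>) (map (\<lambda>x. inv x) (rev l)) \<one>"
proof (induction l)
  case Nil then show ?case by simp
next
  case (Cons s l)
  have "inv (foldr (\<otimes>) (s#l) \<one>) = inv (foldr (\<otimes>) l \<one>) \<otimes> inv s"
    using Cons.prems by (simp add: inv_mult_group foldr_closed)
  also have "\<dots> = foldr (\<otimes>) (map (\<lambda>x. inv x) (rev l)) \<one> \<otimes> foldr (\<otimes>) [inv s] \<one>"
    using Cons by simp
  also have "\<dots> = foldr (\<otimes>) (map (\<lambda>x. inv x) (rev l) @ [inv s]) \<one>"
    using Cons.prems by (subst foldr_append) auto
  finally show ?case by simp
qed


lemma (in group) T_list: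
  assumes "t \<in> set_power G S r \<union> {\<one>}"
  shows "\<exists>l. set l \<subseteq> S \<and> length l \<le> r \<and> t = foldr (\<otimes>) l \<one>"
  using assms unfolding set_power_def
  by (auto intro: exI[of _ "[]"])

lemma (in group) T_closed:
  assumes "S \<subseteq> carrier G" shows "set_power G S r \<union> {\<one>} \<subseteq> carrier G"
  using assms unfolding set_power_def by (auto intro!: foldr_closed)

lemma (in group) key:
  assumes S: "S \<subseteq> carrier G" "\<forall>s\<in>S. inv s \<in> S"
    and C: "C \<subseteq> carrier G" "\<forall>c\<in>C. \<forall>c'\<in>C. c \<noteq> c' \<longrightarrow> enat d \<le> cay_dist G S c c'"
    and t: "t \<in> set_power G S ((d - 1) div 2) \<union> {\<one>}" "t' \<in> set_power G S ((d - 1) div 2) \<union> {\<one>}"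
    and c: "c \<in> C" "c' \<in> C" and eq: "t \<otimes> c = t' \<otimes> c'" and d: "0 < d"
  shows "c = c' \<and> t = t'"
proof -
  obtain l where l: "set l \<subseteq> S" "length l \<le> (d - 1) div 2" "t = foldr (\<otimes>) l \<one>"
    using T_list[OF t(1)] by blast
  obtain k where k: "set k \<subseteq> S" "length k \<le> (d - 1) div 2" "t' = foldr (\<otimes>) k \<one>"
    using T_list[OF t(2)] by blast
  have lc: "set l \<subseteq> carrier G" "set k \<subseteq> carrier G" using l k S by auto
  define L where "L = map (\<lambda>x. inv x) (rev l) @ k"
  have LS: "set L \<subseteq> S" using l k S unfolding L_def by auto
  have Lc: "set L \<subseteq> carrier G" using LS S by auto
  have tc: "t \<in> carrier G" "t' \<in> carrier G" using lc l k foldr_closed by auto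
  have cc: "c \<in> carrier G" "c' \<in> carrier G" using c C by auto
  have "foldr (\<otimes>) L \<one> = inv t \<otimes> t'"
    unfolding L_def using lc l k by (subst foldr_append) (auto simp: foldr_inv)
  moreover have "c = inv t \<otimes> t' \<otimes> c'"
  proof -
    have "c = inv t \<otimes> (t \<otimes> c)" using tc cc by (simp add: m_assoc[symmetric])
    also have "\<dots> = inv t \<otimes> t' \<otimes> c'" using eq tc cc by (simp add: m_assoc)
    finally show ?thesis .
  qed
  ultimately have ceq: "c = foldr (\<otimes>) L \<one> \<otimes> c'" by simp
  have len: "length L < d" unfolding L_def using l k d by simp
  have cd: "c = c'"
  proof (rule ccontr)
    assume "c \<noteq> c'"
    hence "enat d \<le> cay_dist G S c c'" using C c by blast
    moreover have "cay_dist G S c c' \<le> enat (length L)"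
      using dist_list[OF LS S(1) cc(2)] ceq by simp
    ultimately have "enat d \<le> enat (length L)" by (rule order_trans)
    thus False using len by simp
  qed
  then show ?thesis using eq tc cc r_cancel by blast
qed


lemma (in group) main:
  fixes S C H :: "'a set" and d m :: nat and a :: "nat \<Rightarrow> 'a"
  assumes "True" and "finite (carrier G)"
    and "S \<subseteq> carrier G" and "S \<noteq> {}" and "\<forall>s\<in>S. inv s \<in> S" and "\<one> \<notin> S"
    and "0 < d"
    and "C \<subseteq> carrier G"
    and "\<forall>c\<in>C. \<forall>c'\<in>C. c \<noteq> c' \<longrightarrow> enat d \<le> cay_dist G S c c'"
    and "subgroup H G"
    and "\<forall>i\<in>{1..m}. a i \<in> carrier G"
    and "bij_betw (\<lambda>i. H #> a i) {1..m} (rcosets H)"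
  shows "int (card C) \<le> ip_opt G H a m (set_power G S ((d - 1) div 2) \<union> {\<one>})"
proof -
  interpret H: subgroup H G by fact
  define T where "T = set_power G S ((d - 1) div 2) \<union> {\<one>}"
  have Tc: "T \<subseteq> carrier G" unfolding T_def using T_closed assms(3) by blast
  have fT: "finite T" using Tc assms(2) finite_subset by blast
  have HC: "H \<subseteq> carrier G" by (rule H.subset)
  have fC: "finite C" using assms(8,2) finite_subset by blast
  have ac: "\<And>i. i \<in> {1..m} \<Longrightarrow> a i \<in> carrier G" using assms(11) by blast
  have inj: "inj_on (\<lambda>i. H #> a i) {1..m}" and img: "(\<lambda>i. H #> a i) ` {1..m} = rcosets H"
    using assms(12) unfolding bij_betw_def by auto
  have cardcos: "\<And>g. g \<in> carrier G \<Longrightarrow> card (H #> g) = card H"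
    using card_cosets_equal[OF rcosetsI[OF HC] HC] bij_betw_same_card by metis
  define A where "A = (\<lambda>i. {c\<in>C. inv c \<in> H #> a i})"
  define x where "x = (\<lambda>i. int (card (A i)))"
  have row: "(\<Sum>j=1..m. (\<Sum>t\<in>T. rho G H a t i j) * x j) \<le> int (card H)" if i: "i \<in> {1..m}" for i
  proof -
    have one: "(\<Sum>j=1..m. rho G H a t i j * x j) = int (card {c\<in>C. inv c \<in> H #> (a i \<otimes> t)})"
      if t: "t \<in> T" for t
    proof -
      have tc: "t \<in> carrier G" using t Tc by blast
      have "H #> (a i \<otimes> t) \<in> rcosets H" using rcosetsI[OF HC] ac[OF i] tc by simp
      then obtain j0 where j0: "j0 \<in> {1..m}" "H #> a j0 = H #> (a i \<otimes> t)"
        using img by (metis imageE)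
      have co: "H #> a i #> t = H #> (a i \<otimes> t)" using coset_mult_assoc[OF HC ac[OF i] tc] .
      have "(\<Sum>j=1..m. rho G H a t i j * x j) = (\<Sum>j=1..m. if j = j0 then x j else 0)"
      proof (rule sum.cong[OF refl])
        fix j assume j: "j \<in> {1..m}"
        have "(H #> a i #> t = H #> a j) = (j = j0)"
          using inj j j0 co unfolding inj_on_def by metis
        thus "rho G H a t i j * x j = (if j = j0 then x j else 0)"
          unfolding rho_def by simp
      qed
      also have "\<dots> = x j0" using j0(1) by simp
      finally show ?thesis unfolding x_def A_def using j0(2) by simp
    qed
    define B where "B = (\<lambda>t. {c\<in>C. inv c \<in> H #> (a i \<otimes> t)})"
    have "(\<Sum>j=1..m. (\<Sum>t\<in>T. rho G H a t i j) * x j) = (\<Sum>t\<in>T. \<Sum>j=1..m. rho G H a t i j * x j)"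
      by (simp add: sum_distrib_right sum.swap[of _ T])
    also have "\<dots> = (\<Sum>t\<in>T. int (card (B t)))" using one unfolding B_def by simp
    also have "\<dots> = int (card (Sigma T B))"
      using fT fC by (simp add: card_SigmaI B_def)
    also have "card (Sigma T B) \<le> card (H #> a i)"
    proof (rule card_inj_on_le[where f = "\<lambda>(t, c). inv c \<otimes> inv t"])
      show "inj_on (\<lambda>(t, c). inv c \<otimes> inv t) (Sigma T B)"
      proof (rule inj_onI)
        fix p q assume hp: "p \<in> Sigma T B" "q \<in> Sigma T B"
          "(\<lambda>(t, c). inv c \<otimes> inv t) p = (\<lambda>(t, c). inv c \<otimes> inv t) q"
        obtain t c where p: "p = (t, c)" by (cases p)
        obtain t' c' where q: "q = (t', c')" by (cases q)
        have h: "t \<in> T" "c \<in> B t" "t' \<in> T" "c' \<in> B t'" "inv c \<otimes> inv t = inv c' \<otimes> inv t'"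
          using hp p q by auto
        have tc: "t \<in> carrier G" "t' \<in> carrier G" "c \<in> carrier G" "c' \<in> carrier G"
          using h Tc assms(8) unfolding B_def by auto
        have "t \<otimes> c = t' \<otimes> c'"
          using h(5) tc by (metis inv_mult_group inv_inv m_closed)
        hence "t = t' \<and> c = c'"
          using key[OF assms(3,5,8,9), of t t' c c'] h assms(7) unfolding B_def T_def by auto
        thus "p = q" using p q by simp
      qed
      show "(\<lambda>(t, c). inv c \<otimes> inv t) ` Sigma T B \<subseteq> H #> a i"
      proof clarify
        fix t c assume h: "t \<in> T" "c \<in> B t"
        have tc: "t \<in> carrier G" "c \<in> carrier G" using h Tc assms(8) unfolding B_def by auto
        obtain hh where hh: "hh \<in> H" "inv c = hh \<otimes> (a i \<otimes> t)"
          using h unfolding B_def r_coset_def by auto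
        have "inv c \<otimes> inv t = hh \<otimes> a i"
          using hh tc ac[OF i] HC by (auto simp: m_assoc)
        thus "inv c \<otimes> inv t \<in> H #> a i" using hh(1) unfolding r_coset_def by auto
      qed
      show "finite (H #> a i)" using assms(2) r_coset_subset_G[OF HC ac[OF i]] finite_subset by blast
    qed
    hence "int (card (Sigma T B)) \<le> int (card H)" using cardcos[OF ac[OF i]] by simp
    finally show ?thesis .
  qed
  have feas: "ip_feasible G H a m T x"
    unfolding ip_feasible_def using row by (auto simp: x_def)
  have obj: "(\<Sum>i=1..m. x i) = int (card C)"
  proof -
    have "C = (\<Union>i\<in>{1..m}. A i)"
    proof
      show "C \<subseteq> (\<Union>i\<in>{1..m}. A i)"
      proof
        fix c assume c: "c \<in> C"
        hence "inv c \<in> carrier G" using assms(8) by auto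
        hence "inv c \<in> \<Union>(rcosets H)" using rcosets_part_G[OF assms(10)] by simp
        then show "c \<in> (\<Union>i\<in>{1..m}. A i)" using img c unfolding A_def by auto
      qed
    qed (auto simp: A_def)
    moreover have "card (\<Union>i\<in>{1..m}. A i) = (\<Sum>i=1..m. card (A i))"
    proof (rule card_UN_disjoint)
      show "\<forall>i\<in>{1..m}. finite (A i)" using fC unfolding A_def by auto
      show "\<forall>i\<in>{1..m}. \<forall>j\<in>{1..m}. i \<noteq> j \<longrightarrow> A i \<inter> A j = {}"
      proof (intro ballI impI)
        fix i j assume ij: "i \<in> {1..m}" "j \<in> {1..m}" "i \<noteq> j"
        hence ne: "H #> a i \<noteq> H #> a j" using inj unfolding inj_on_def by blast
        have "H #> a i \<in> rcosets H" "H #> a j \<in> rcosets H" using img ij by auto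
        hence "disjnt (H #> a i) (H #> a j)" using rcos_disjoint[OF assms(10)] ne
          unfolding pairwise_def by blast
        thus "A i \<inter> A j = {}" unfolding A_def disjnt_def by auto
      qed
    qed simp
    ultimately show ?thesis unfolding x_def by simp
  qed
  have bound: "(\<Sum>i=1..m. y i) \<in> {0..int m * int (card H)}" if y: "ip_feasible G H a m T y" for y
  proof -
    have nn: "\<And>i. i \<in> {1..m} \<Longrightarrow> 0 \<le> y i" using y unfolding ip_feasible_def by blast
    have rnn: "\<And>t i j. 0 \<le> rho G H a t i j" unfolding rho_def by simp
    have le: "y i \<le> int (card H)" if i: "i \<in> {1..m}" for i
    proof -
      have "1 \<le> (\<Sum>t\<in>T. rho G H a t i i)"
      proof -
        have "rho G H a \<one> i i = 1" unfolding rho_def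
          using coset_mult_one r_coset_subset_G[OF HC ac[OF i]] by simp
        moreover have "rho G H a \<one> i i \<le> (\<Sum>t\<in>T. rho G H a t i i)"
          by (rule member_le_sum) (use fT in \<open>auto simp: T_def rnn\<close>)
        ultimately show ?thesis by simp
      qed
      hence s1: "y i \<le> (\<Sum>t\<in>T. rho G H a t i i) * y i" using nn[OF i]
        by (metis mult_le_cancel_right1 order_less_le not_le)
      have s2: "(\<Sum>t\<in>T. rho G H a t i i) * y i \<le> (\<Sum>j=1..m. (\<Sum>t\<in>T. rho G H a t i j) * y j)"
        by (rule member_le_sum[where f = "\<lambda>j. (\<Sum>t\<in>T. rho G H a t i j) * y j"])
           (use i nn rnn in \<open>auto intro!: sum_nonneg mult_nonneg_nonneg\<close>)
      have s3: "(\<Sum>j=1..m. (\<Sum>t\<in>T. rho G H a t i j) * y j) \<le> int (card H)" using y i unfolding ip_feasible_def by blast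
      from s1 s2 s3 show ?thesis by linarith
    qed
    have "(\<Sum>i=1..m. y i) \<le> (\<Sum>i=1..m. int (card H))" by (rule sum_mono) (use le in auto)
    moreover have "0 \<le> (\<Sum>i=1..m. y i)" by (rule sum_nonneg) (use nn in auto)
    ultimately show ?thesis by simp
  qed
  have fin: "finite ((\<lambda>x. \<Sum>i=1..m. x i) ` {x. ip_feasible G H a m T x})"
    by (rule finite_subset[of _ "{0..int m * int (card H)}"]) (use bound in auto)
  have "int (card C) \<in> (\<lambda>x. \<Sum>i=1..m. x i) ` {x. ip_feasible G H a m T x}"
    using feas obj by (metis (mono_tags, lifting) image_eqI mem_Collect_eq)
  hence "int (card C) \<le> ip_opt G H a m T" unfolding ip_opt_def using fin by (rule Max_ge[rotated])
  thus ?thesis unfolding T_def .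
qed

theorem theorem2p14:
  fixes G :: "('a, 'b) monoid_scheme" and S C H :: "'a set" and d m :: nat and a :: "nat \<Rightarrow> 'a"
  assumes "group G" and "finite (carrier G)"
    and "S \<subseteq> carrier G" and "S \<noteq> {}" and "\<forall>s\<in>S. inv\<^bsub>G\<^esub> s \<in> S" and "\<one>\<^bsub>G\<^esub> \<notin> S"
    and "0 < d"
    and "C \<subseteq> carrier G"
    and "\<forall>c\<in>C. \<forall>c'\<in>C. c \<noteq> c' \<longrightarrow> enat d \<le> cay_dist G S c c'"
    and "subgroup H G"
    and "\<forall>i\<in>{1..m}. a i \<in> carrier G"
    and "bij_betw (\<lambda>i. H #>\<^bsub>G\<^esub> a i) {1..m} (rcosets\<^bsub>G\<^esub> H)"
  shows "int (card C) \<le> ip_opt G H a m (set_power G S ((d - 1) div 2) \<union> {\<one>\<^bsub>G\<^esub>})"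
  by (rule group.main[OF assms(1) TrueI assms(2-)])

end
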